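(* Let $H$ be a graph with $t\geq 1$ vertices and $q$ edges, and assume that $H$ contains a 2-degenerate spanning subgraph $H'$ with $q'$ edges. Let $G$ be a graph with $n\geq 1$ vertices and minimum degree $\delta$, with $2\delta-n\geq q-q'+t-2$. Then $G$ contains a $(\leq 1)$-subdivision of $H$ as a subgraph.
   Context: All graphs are finite and simple. A graph is 2-degenerate if every non-empty subgraph of it has a vertex of degree at most 2. A subgraph $H'$ of $H$ is spanning if $V(H')=V(H)$. A $(\leq 1)$-subdivision of $H$ is a graph obtained from $H$ by subdividing each edge of $H$ at most once (i.e., replacing some edges by paths of length 2 through new vertices). *)

theory Defs
  imports Main
begin

definition graph :: "'a set \<Rightarrow> 'a set set \<Rightarrow> bool" where
  "graph V E \<longleftrightarrow> finite V \<and> (\<forall>e\<in>E. \<exists>u v. u \<in> V \<and> v \<in> V \<and> u \<noteq> v \<and> e = {u, v})"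

definition degree :: "'a set set \<Rightarrow> 'a \<Rightarrow> nat" where
  "degree E v = card {e \<in> E. v \<in> e}"

definition min_degree :: "'a set \<Rightarrow> 'a set set \<Rightarrow> nat" where
  "min_degree V E = Min (degree E ` V)"

definition subgraph :: "'a set \<Rightarrow> 'a set set \<Rightarrow> 'a set \<Rightarrow> 'a set set \<Rightarrow> bool" where
  "subgraph V' E' V E \<longleftrightarrow> graph V' E' \<and> V' \<subseteq> V \<and> E' \<subseteq> E"

definition spanning_subgraph :: "'a set \<Rightarrow> 'a set set \<Rightarrow> 'a set \<Rightarrow> 'a set set \<Rightarrow> bool" where
  "spanning_subgraph V' E' V E \<longleftrightarrow> subgraph V' E' V E \<and> V' = V"

definition two_degenerate :: "'a set \<Rightarrow> 'a set set \<Rightarrow> bool" where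
  "two_degenerate V E \<longleftrightarrow>
     (\<forall>V' E'. subgraph V' E' V E \<and> V' \<noteq> {} \<longrightarrow> (\<exists>v\<in>V'. degree E' v \<le> 2))"

text \<open>G contains a (<=1)-subdivision of H as a subgraph: there is an injective map f of the
  branch vertices and, for each edge of H, either the edge is kept (its image is an edge of G),
  or it is subdivided once through a new vertex m e of G, which is not a branch vertex, with
  distinct subdivided edges using distinct new vertices.\<close>
definition contains_le1_subdivision ::
  "'b set \<Rightarrow> 'b set set \<Rightarrow> 'a set \<Rightarrow> 'a set set \<Rightarrow> bool" where
  "contains_le1_subdivision VG EG VH EH \<longleftrightarrow>
     (\<exists>(f :: 'a \<Rightarrow> 'b) (m :: 'a set \<Rightarrow> 'b option).
        inj_on f VH \<and> f ` VH \<subseteq> VG \<and>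
        (\<forall>e\<in>EH. \<forall>e'\<in>EH. m e \<noteq> None \<and> m e = m e' \<longrightarrow> e = e') \<and>
        (\<forall>e\<in>EH. case m e of
            None \<Rightarrow> f ` e \<in> EG
          | Some w \<Rightarrow> w \<in> VG \<and> w \<notin> f ` VH \<and> (\<forall>u\<in>e. {f u, w} \<in> EG)))"

end

theory Submission
  imports Defs
begin

lemma graph_finE: "graph V E \<Longrightarrow> finite E"
proof -
  assume g: "graph V E"
  have "E \<subseteq> Pow V"
  proof
    fix e assume "e \<in> E"
    then obtain u v where "u \<in> V" "v \<in> V" "e = {u,v}" using g unfolding graph_def by blast
    thus "e \<in> Pow V" by simp
  qed
  moreover have "finite V" using g unfolding graph_def by simp
  ultimately show ?thesis by (simp add: finite_subset)
qed
lemma no_loop: "graph V E \<Longrightarrow> {a, a} \<notin> E"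
proof
  assume "graph V E" "{a, a} \<in> E"
  then obtain u v where "u \<noteq> v" "{a, a} = {u, v}" unfolding graph_def by blast
  hence "{u, v} \<subseteq> {a}" by (metis equalityD2 insert_absorb2)
  thus False using \<open>u \<noteq> v\<close> by simp
qed

lemma nbr_card:
  assumes g: "graph V E" and a: "a \<in> V"
  shows "card {w\<in>V. {a,w}\<in>E} = degree E a"
proof -
  have "bij_betw (\<lambda>w. {a,w}) {w\<in>V. {a,w}\<in>E} {e\<in>E. a\<in>e}"
    unfolding bij_betw_def
  proof
    show "inj_on (\<lambda>w. {a,w}) {w\<in>V. {a,w}\<in>E}"
      unfolding inj_on_def by (auto simp: doubleton_eq_iff)
    show "(\<lambda>w. {a,w}) ` {w\<in>V. {a,w}\<in>E} = {e\<in>E. a\<in>e}"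
    proof
      show "(\<lambda>w. {a,w}) ` {w\<in>V. {a,w}\<in>E} \<subseteq> {e\<in>E. a\<in>e}" by auto
      show "{e\<in>E. a\<in>e} \<subseteq> (\<lambda>w. {a,w}) ` {w\<in>V. {a,w}\<in>E}"
      proof
        fix e assume e: "e \<in> {e\<in>E. a\<in>e}"
        then obtain u v where uv: "u \<in> V" "v \<in> V" "e = {u,v}" using g unfolding graph_def by blast
        show "e \<in> (\<lambda>w. {a,w}) ` {w\<in>V. {a,w}\<in>E}"
        proof (cases "a = u")
          case True thus ?thesis using e uv by (auto intro!: image_eqI[of _ _ v])
        next
          case False hence "a = v" using e uv by auto
          thus ?thesis using e uv by (auto intro!: image_eqI[of _ _ u] simp: insert_commute)
        qed
      qed
    qed
  qed
  thus ?thesis unfolding degree_def by (rule bij_betw_same_card)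
qed

lemma min_deg_le:
  assumes g: "graph V E" and a: "a \<in> V"
  shows "min_degree V E \<le> card {w\<in>V. {a,w}\<in>E}"
proof -
  have "finite V" using g unfolding graph_def by blast
  hence "min_degree V E \<le> degree E a" unfolding min_degree_def using a by (auto intro: Min_le)
  thus ?thesis using nbr_card[OF g a] by simp
qed

lemma nbr_sub:
  assumes g: "graph V E"
  shows "{w\<in>V. {a,w}\<in>E} \<subseteq> V - {a}"
  using no_loop[OF g] by auto

lemma min_deg_bound:
  assumes g: "graph V E" and n: "card V \<ge> 1"
  shows "min_degree V E + 1 \<le> card V"
proof -
  have fin: "finite V" using g unfolding graph_def by blast
  obtain a where a: "a \<in> V" using n by fastforce
  have "card {w\<in>V. {a,w}\<in>E} \<le> card (V - {a})"
    by (rule card_mono) (use fin nbr_sub[OF g] in auto)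
  also have "\<dots> = card V - 1" using a fin by simp
  finally show ?thesis using min_deg_le[OF g a] n by linarith
qed

lemma common_card:
  assumes g: "graph V E" and a: "a \<in> V" and b: "b \<in> V"
  shows "int (card {w\<in>V. \<forall>x\<in>{a,b}. {x,w}\<in>E}) \<ge> 2 * int (min_degree V E) - int (card V)"
proof -
  have fin: "finite V" using g unfolding graph_def by blast
  let ?A = "{w\<in>V. {a,w}\<in>E}" and ?B = "{w\<in>V. {b,w}\<in>E}"
  have eq: "{w\<in>V. \<forall>x\<in>{a,b}. {x,w}\<in>E} = ?A \<inter> ?B" by auto
  have "card ?A + card ?B = card (?A \<union> ?B) + card (?A \<inter> ?B)"
    by (rule card_Un_Int) (use fin in auto)
  moreover have "card (?A \<union> ?B) \<le> card V" by (rule card_mono) (use fin in auto)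
  moreover note min_deg_le[OF g a] min_deg_le[OF g b]
  ultimately show ?thesis unfolding eq by linarith
qed

lemma pick:
  assumes g: "graph V E" and AF: "A \<subseteq> F" and FV: "F \<subseteq> V"
    and c: "card {w\<in>V. \<forall>x\<in>A. {x,w}\<in>E} + card A > card F"
  shows "\<exists>w\<in>V. w \<notin> F \<and> (\<forall>x\<in>A. {x,w}\<in>E)"
proof (rule ccontr)
  assume nt: "\<not> (\<exists>w\<in>V. w \<notin> F \<and> (\<forall>x\<in>A. {x,w}\<in>E))"
  let ?C = "{w\<in>V. \<forall>x\<in>A. {x,w}\<in>E}"
  have fin: "finite V" using g unfolding graph_def by blast
  have "?C \<subseteq> F" using nt by auto
  moreover have "?C \<inter> A = {}" using no_loop[OF g] by auto
  ultimately have "card (?C \<union> A) \<le> card F"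
    using AF FV fin by (intro card_mono) (auto intro: finite_subset)
  moreover have "card (?C \<union> A) = card ?C + card A"
    using \<open>?C \<inter> A = {}\<close> AF FV fin by (intro card_Un_disjoint) (auto intro: finite_subset)
  ultimately show False using c by linarith
qed


lemma phase1:
  assumes gH: "graph VH EH'" and deg: "two_degenerate VH EH'" and gG: "graph VG EG"
    and cnt: "\<And>A. A \<subseteq> VG \<Longrightarrow> card A \<le> 2 \<Longrightarrow> card {w\<in>VG. \<forall>x\<in>A. {x,w}\<in>EG} + card A \<ge> card VH"
  shows "S \<subseteq> VH \<Longrightarrow> \<exists>f. inj_on f S \<and> f ` S \<subseteq> VG \<and> (\<forall>e\<in>EH'. e \<subseteq> S \<longrightarrow> f ` e \<in> EG)"
proof (induction "card S" arbitrary: S rule: less_induct)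
  case less
  have finVH: "finite VH" using gH unfolding graph_def by blast
  have finS: "finite S" using less.prems finVH finite_subset by blast
  show ?case
  proof (cases "S = {}")
    case True then show ?thesis using gH unfolding graph_def by auto
  next
    case False
    define ES where "ES = {e\<in>EH'. e \<subseteq> S}"
    have "subgraph S ES VH EH'"
      unfolding subgraph_def graph_def
    proof (intro conjI ballI)
      show "finite S" by (rule finS)
      show "S \<subseteq> VH" by (rule less.prems)
      show "ES \<subseteq> EH'" unfolding ES_def by blast
      fix e assume "e \<in> ES"
      hence e: "e \<in> EH'" "e \<subseteq> S" unfolding ES_def by auto
      then obtain u v where "u \<noteq> v" "e = {u,v}" using gH unfolding graph_def by blast
      thus "\<exists>u v. u \<in> S \<and> v \<in> S \<and> u \<noteq> v \<and> e = {u, v}" using e(2) by blast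
    qed
    then obtain v where v: "v \<in> S" "degree ES v \<le> 2" using deg False unfolding two_degenerate_def by blast
    define S' where "S' = S - {v}"
    have S'S: "card S' < card S" unfolding S'_def using v finS by (meson card_Diff1_less)
    have "S' \<subseteq> VH" unfolding S'_def using less.prems by blast
    then obtain f where f: "inj_on f S'" "f ` S' \<subseteq> VG" "\<forall>e\<in>EH'. e \<subseteq> S' \<longrightarrow> f`e \<in> EG"
      using less.hyps[OF S'S] by blast
    define N where "N = {u\<in>S'. {u,v} \<in> EH'}"
    have finN: "finite N" unfolding N_def S'_def using finS by simp
    have finES: "finite ES" unfolding ES_def using graph_finE[OF gH] by simp
    have "card N \<le> card {e\<in>ES. v\<in>e}"
    proof (rule card_inj_on_le[of "\<lambda>u. {u,v}"])
      show "inj_on (\<lambda>u. {u, v}) N" unfolding inj_on_def by (auto simp: doubleton_eq_iff)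
      show "(\<lambda>u. {u, v}) ` N \<subseteq> {e \<in> ES. v \<in> e}" unfolding N_def ES_def S'_def using v by auto
      show "finite {e \<in> ES. v \<in> e}" using finES by simp
    qed
    hence cN: "card (f ` N) \<le> 2" using v(2) card_image_le[OF finN, of f] unfolding degree_def by linarith
    have NS: "f ` N \<subseteq> f ` S'" unfolding N_def by blast
    have cS': "card (f ` S') < card VH"
    proof -
      have "card (f ` S') = card S'" using card_image[OF f(1)] .
      also have "\<dots> < card S" by (rule S'S)
      also have "\<dots> \<le> card VH" using less.prems finVH card_mono by blast
      finally show ?thesis .
    qed
    have "card {w\<in>VG. \<forall>x\<in>f ` N. {x,w}\<in>EG} + card (f ` N) > card (f ` S')"
    proof -
      have "f ` N \<subseteq> VG" using NS f(2) by blast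
      from cnt[OF this cN] cS' show ?thesis by linarith
    qed
    from pick[OF gG NS f(2) this] obtain w where
      w: "w \<in> VG" "w \<notin> f ` S'" "\<forall>x\<in>f ` N. {x,w}\<in>EG" by blast
    define g where "g = f(v := w)"
    have Seq: "S = insert v S'" unfolding S'_def using v by blast
    have vS': "v \<notin> S'" unfolding S'_def by simp
    have ig: "inj_on g S' = inj_on f S'" by (rule inj_on_cong) (auto simp: g_def vS')
    have img: "g ` S' = f ` S'" by (rule image_cong) (auto simp: g_def vS')
    have gv: "g v = w" by (simp add: g_def)
    have "inj_on g S" unfolding Seq using ig img f(1) w(2) gv by (simp add: vS')
    moreover have "g ` S \<subseteq> VG" unfolding Seq using img f(2) w(1) gv by auto
    moreover have "\<forall>e\<in>EH'. e \<subseteq> S \<longrightarrow> g ` e \<in> EG"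
    proof (intro ballI impI)
      fix e assume e: "e \<in> EH'" "e \<subseteq> S"
      show "g ` e \<in> EG"
      proof (cases "v \<in> e")
        case False
        hence "e \<subseteq> S'" using e unfolding S'_def by blast
        moreover have "g ` e = f ` e" by (rule image_cong) (use False in \<open>auto simp: g_def\<close>)
        ultimately show ?thesis using f(3) e by simp
      next
        case True
        obtain x y where xy: "x \<noteq> y" "e = {x,y}" using e gH unfolding graph_def by blast
        obtain u where u: "u \<noteq> v" "e = {v,u}"
        proof (cases "x = v")
          case True thus ?thesis using that[of y] xy by blast
        next
          case False
          hence "y = v" using \<open>v \<in> e\<close> xy by blast
          thus ?thesis using that[of x] xy by (metis insert_commute)
        qed
        have "u \<in> S'" using u e unfolding S'_def by blast
        moreover have "{u,v} \<in> EH'" using u e by (simp add: insert_commute)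
        ultimately have "u \<in> N" unfolding N_def by blast
        hence "{f u, w} \<in> EG" using w(3) by blast
        moreover have "g u = f u" using u by (simp add: g_def)
        ultimately show ?thesis using u gv by (simp add: insert_commute)
      qed
    qed
    ultimately show ?thesis by blast
  qed
qed

lemma phase2:
  assumes gG: "graph VG EG" and f: "inj_on f VH" "f ` VH \<subseteq> VG" and gH: "graph VH EH"
    and D: "finite D" "D \<subseteq> EH"
    and cnt2: "\<And>a b. a\<in>VG \<Longrightarrow> b\<in>VG \<Longrightarrow> a\<noteq>b \<Longrightarrow>
        card {w\<in>VG. \<forall>x\<in>{a,b}. {x,w}\<in>EG} + 2 \<ge> card VH + card D"
  shows "finite D0 \<Longrightarrow> D0 \<subseteq> D \<Longrightarrow> \<exists>g. inj_on g D0 \<and>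
     (\<forall>e\<in>D0. g e \<in> VG \<and> g e \<notin> f ` VH \<and> (\<forall>u\<in>e. {f u, g e} \<in> EG))"
proof (induction D0 rule: finite_induct)
  case empty then show ?case by simp
next
  case (insert e D0)
  then obtain g where g: "inj_on g D0" "\<forall>e\<in>D0. g e \<in> VG \<and> g e \<notin> f ` VH \<and> (\<forall>u\<in>e. {f u, g e} \<in> EG)"
    by blast
  have finVH: "finite VH" using gH unfolding graph_def by blast
  have "e \<in> EH" using insert D by blast
  then obtain x y where xy: "x \<in> VH" "y \<in> VH" "x \<noteq> y" "e = {x,y}" using gH unfolding graph_def by blast
  have ab: "f x \<noteq> f y" using f(1) xy by (meson inj_on_contraD)
  have abV: "f x \<in> VG" "f y \<in> VG" using f(2) xy by auto
  define F where "F = f ` VH \<union> g ` D0"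
  have FV: "F \<subseteq> VG" unfolding F_def using f(2) g(2) by auto
  have AF: "{f x, f y} \<subseteq> F" unfolding F_def using xy by auto
  have "card F \<le> card (f ` VH) + card (g ` D0)" unfolding F_def by (rule card_Un_le)
  also have "\<dots> \<le> card VH + card D0" using card_image_le[OF finVH] card_image_le[OF insert(1)]
    by (meson add_mono)
  finally have cF: "card F \<le> card VH + card D0" .
  have "card (insert e D0) \<le> card D" using insert D card_mono by blast
  hence "card D0 + 1 \<le> card D" using insert by simp
  hence "card {w\<in>VG. \<forall>x\<in>{f x, f y}. {x,w}\<in>EG} + card {f x, f y} > card F"
    using cnt2[OF abV ab] cF ab by simp
  from pick[OF gG AF FV this] obtain w where
    w: "w \<in> VG" "w \<notin> F" "\<forall>z\<in>{f x, f y}. {z,w}\<in>EG" by blast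
  define g' where "g' = g(e := w)"
  have ig: "inj_on g' D0 = inj_on g D0" by (rule inj_on_cong) (use insert in \<open>auto simp: g'_def\<close>)
  have img: "g' ` D0 = g ` D0" by (rule image_cong) (use insert in \<open>auto simp: g'_def\<close>)
  have ge: "g' e = w" by (simp add: g'_def)
  have "inj_on g' (insert e D0)" using ig img g(1) ge w(2) insert(2) unfolding F_def by simp
  moreover have "\<forall>e'\<in>insert e D0. g' e' \<in> VG \<and> g' e' \<notin> f ` VH \<and> (\<forall>u\<in>e'. {f u, g' e'} \<in> EG)"
  proof
    fix e' assume "e' \<in> insert e D0"
    then show "g' e' \<in> VG \<and> g' e' \<notin> f ` VH \<and> (\<forall>u\<in>e'. {f u, g' e'} \<in> EG)"
    proof
      assume "e' = e" thus ?thesis using ge w xy unfolding F_def by auto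
    next
      assume "e' \<in> D0"
      moreover hence "g' e' = g e'" using insert(2) by (auto simp: g'_def)
      ultimately show ?thesis using g(2) by simp
    qed
  qed
  ultimately show ?case by blast
qed


theorem lemma13:
  fixes VH :: "'a set" and EH EH' :: "'a set set"
    and VG :: "'b set" and EG :: "'b set set"
  assumes "graph VH EH" and "card VH \<ge> 1"
    and "spanning_subgraph VH EH' VH EH" and "two_degenerate VH EH'"
    and "graph VG EG" and "card VG \<ge> 1"
    and "2 * int (min_degree VG EG) - int (card VG)
           \<ge> int (card EH) - int (card EH') + int (card VH) - 2"
  shows "contains_le1_subdivision VG EG VH EH"
proof -
  note gH = assms(1) and gG = assms(5) and h7 = assms(7)
  have gH': "graph VH EH'" and sub: "EH' \<subseteq> EH"
    using assms(3) unfolding spanning_subgraph_def subgraph_def by simp_all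
  have finEH: "finite EH" using graph_finE[OF gH] .
  have finEH': "finite EH'" using graph_finE[OF gH'] .
  have finVG: "finite VG" using gG unfolding graph_def by simp
  have qq: "card EH' \<le> card EH" using card_mono[OF finEH sub] .
  have db: "min_degree VG EG + 1 \<le> card VG" using min_deg_bound[OF gG assms(6)] .
  have cnt: "card {w\<in>VG. \<forall>x\<in>A. {x,w}\<in>EG} + card A \<ge> card VH"
    if A: "A \<subseteq> VG" "card A \<le> 2" for A
  proof -
    have finA: "finite A" using A(1) finVG finite_subset by blast
    consider "card A = 0" | "card A = 1" | "card A = 2" using A(2) by linarith
    then show ?thesis
    proof cases
      case 1
      hence "A = {}" using finA by simp
      hence "card {w\<in>VG. \<forall>x\<in>A. {x,w}\<in>EG} = card VG" by simp
      thus ?thesis using 1 h7 db qq by linarith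
    next
      case 2
      then obtain a where a: "A = {a}" by (rule card_1_singletonE)
      hence aV: "a \<in> VG" using A by simp
      have "card {w\<in>VG. \<forall>x\<in>A. {x,w}\<in>EG} = card {w\<in>VG. {a,w}\<in>EG}" using a by simp
      moreover have "min_degree VG EG \<le> card {w\<in>VG. {a,w}\<in>EG}" using min_deg_le[OF gG aV] .
      ultimately show ?thesis using 2 h7 db qq by linarith
    next
      case 3
      then obtain a b where ab: "A = {a,b}" "a \<noteq> b" by (meson card_2_iff)
      hence abV: "a \<in> VG" "b \<in> VG" using A by simp_all
      have "int (card {w\<in>VG. \<forall>x\<in>A. {x,w}\<in>EG}) \<ge> 2 * int (min_degree VG EG) - int (card VG)"
        using common_card[OF gG abV] ab by simp
      thus ?thesis using 3 h7 db qq by linarith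
    qed
  qed
  obtain f where f: "inj_on f VH" "f ` VH \<subseteq> VG" "\<forall>e\<in>EH'. e \<subseteq> VH \<longrightarrow> f ` e \<in> EG"
    using phase1[OF gH' assms(4) gG cnt] by blast
  define D where "D = EH - EH'"
  have finD: "finite D" unfolding D_def using finEH by simp
  have DE: "D \<subseteq> EH" unfolding D_def by blast
  have cD: "card D = card EH - card EH'" unfolding D_def using card_Diff_subset[OF finEH' sub] .
  have cnt2: "card {w\<in>VG. \<forall>x\<in>{a,b}. {x,w}\<in>EG} + 2 \<ge> card VH + card D"
    if "a\<in>VG" "b\<in>VG" "a\<noteq>b" for a b
    using common_card[OF gG that(1,2)] cD h7 qq by linarith
  obtain g where g: "inj_on g D" "\<forall>e\<in>D. g e \<in> VG \<and> g e \<notin> f ` VH \<and> (\<forall>u\<in>e. {f u, g e} \<in> EG)"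
    using phase2[OF gG f(1,2) gH finD DE cnt2 finD] by blast
  define m where "m = (\<lambda>e. if e \<in> D then Some (g e) else None)"
  have "\<forall>e\<in>EH. \<forall>e'\<in>EH. m e \<noteq> None \<and> m e = m e' \<longrightarrow> e = e'"
  proof (intro ballI impI)
    fix e e' assume "e \<in> EH" "e' \<in> EH" "m e \<noteq> None \<and> m e = m e'"
    hence "e \<in> D" "e' \<in> D" "g e = g e'" unfolding m_def by (auto split: if_splits)
    thus "e = e'" using g(1) by (meson inj_onD)
  qed
  moreover have "\<forall>e\<in>EH. case m e of
            None \<Rightarrow> f ` e \<in> EG
          | Some w \<Rightarrow> w \<in> VG \<and> w \<notin> f ` VH \<and> (\<forall>u\<in>e. {f u, w} \<in> EG)"
  proof
    fix e assume e: "e \<in> EH"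
    show "case m e of
            None \<Rightarrow> f ` e \<in> EG
          | Some w \<Rightarrow> w \<in> VG \<and> w \<notin> f ` VH \<and> (\<forall>u\<in>e. {f u, w} \<in> EG)"
    proof (cases "e \<in> D")
      case True thus ?thesis using g(2) by (simp add: m_def)
    next
      case False
      hence "e \<in> EH'" using e unfolding D_def by blast
      moreover have "e \<subseteq> VH" using e gH unfolding graph_def by auto
      ultimately show ?thesis using f(3) False by (simp add: m_def)
    qed
  qed
  ultimately show ?thesis unfolding contains_le1_subdivision_def using f(1,2) by blast
qed

end
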